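(* Let $n\ge1$ and $\sigma\in\mathrm{B}_n$ be such that the closure $\hat\sigma$ is a knot. Then $\zeta(s,\sigma;\beta_{n,q})$, viewed as a rational function of $s$ over $\mathbb{Q}(q)$, has a simple pole at $s=1$, and $$\operatorname{Res}_{s=1}\zeta(s,\sigma;\beta_{n,q})=-\frac{1}{[n]_q}\,\Delta_{\hat\sigma}(q)^{-1},$$ where $\Delta_{\hat\sigma}(q)$ is the Alexander polynomial of $\hat\sigma$ (the identity holding for a suitable representative of $\Delta_{\hat\sigma}$, i.e. up to a unit $\pm q^k$, $k\in\mathbb{Z}$).
   Context: $\mathrm{B}_n$ is the braid group on $n$ strands with standard generators $\sigma_1,\dots,\sigma_{n-1}$. Let $\Lambda=\mathbb{Z}[q^{\pm1}]$. The Burau representation $\beta_{n,q}:\mathrm{B}_n\to \mathrm{GL}_n(\Lambda)$ is the homomorphism with $\beta_{n,q}(\sigma_i)=I_{i-1}\oplus\begin{pmatrix}1-q&1\\ q&0\end{pmatrix}\oplus I_{n-i-1}$. The braid zeta function is $\zeta(s,\sigma;\beta_{n,q}):=\det(I_n-\beta_{n,q}(\sigma)s)^{-1}$. The closure $\hat\sigma$ of a braid is the link obtained by joining the upper endpoints of the strands to the corresponding lower endpoints. $[n]_q:=\frac{1-q^n}{1-q}=1+q+\dots+q^{n-1}$. The Alexander polynomial $\Delta_K(q)\in\Lambda$ of a knot $K$ is well defined only up to multiplication by units $\pm q^k$ of $\Lambda$. *)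

theory Defs
  imports "Jordan_Normal_Form.Determinant" "HOL-Computational_Algebra.Fraction_Field"
begin

type_synonym qfield = "rat poly fract"

definition qq :: qfield where "qq = Fract [:0, 1:] 1"

definition qint :: "nat \<Rightarrow> qfield" where "qint n = (\<Sum>i<n. qq ^ i)"

text \<open>Braid words in B_n: a letter (i, True) is sigma_(i+1), a letter (i, False) is its inverse,
  with 0-based index i < n - 1.\<close>
type_synonym braid_word = "(nat \<times> bool) list"

definition braid_word :: "nat \<Rightarrow> braid_word \<Rightarrow> bool" where
  "braid_word n w \<longleftrightarrow> (\<forall>(i, e) \<in> set w. Suc i < n)"

definition burau_gen :: "nat \<Rightarrow> nat \<times> bool \<Rightarrow> qfield mat" where
  "burau_gen n g = (case g of (i, e) \<Rightarrow>
     mat n n (\<lambda>(r, c).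
       if r = i \<and> c = i then (if e then 1 - qq else 0)
       else if r = i \<and> c = Suc i then (if e then 1 else inverse qq)
       else if r = Suc i \<and> c = i then (if e then qq else 1)
       else if r = Suc i \<and> c = Suc i then (if e then 0 else 1 - inverse qq)
       else if r = c then 1 else 0))"

definition burau :: "nat \<Rightarrow> braid_word \<Rightarrow> qfield mat" where
  "burau n w = foldr (\<lambda>g M. burau_gen n g * M) w (1\<^sub>m n)"

text \<open>det(I_n - beta(sigma) s), a polynomial in s over Q(q), and the braid zeta function as
  a rational function in s over Q(q).\<close>
definition zeta_den :: "nat \<Rightarrow> braid_word \<Rightarrow> qfield poly" where
  "zeta_den n w = det (1\<^sub>m n - map_mat (\<lambda>x. [:0, x:]) (burau n w))"

definition braid_zeta :: "nat \<Rightarrow> braid_word \<Rightarrow> qfield poly fract" where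
  "braid_zeta n w = inverse (Fract (zeta_den n w) 1)"

definition simple_pole_residue :: "'a::field poly fract \<Rightarrow> 'a \<Rightarrow> 'a \<Rightarrow> bool" where
  "simple_pole_residue z a r \<longleftrightarrow>
     (\<exists>g h. h \<noteq> 0 \<and> poly g a \<noteq> 0 \<and> poly h a \<noteq> 0 \<and>
        z = Fract g ([:-a, 1:] * h) \<and> r = poly g a / poly h a)"

text \<open>Closure of a braid: its components correspond to the cycles of the underlying
  permutation; the closure is a knot iff that permutation acts transitively on the strands.\<close>
definition swap_adj :: "nat \<Rightarrow> nat \<Rightarrow> nat" where
  "swap_adj i x = (if x = i then Suc i else if x = Suc i then i else x)"

definition braid_perm :: "braid_word \<Rightarrow> nat \<Rightarrow> nat" where
  "braid_perm w = foldr (\<lambda>g f. swap_adj (fst g) \<circ> f) w id"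

definition closure_is_knot :: "nat \<Rightarrow> braid_word \<Rightarrow> bool" where
  "closure_is_knot n w \<longleftrightarrow> (\<forall>j<n. \<exists>k. (braid_perm w ^^ k) 0 = j)"

text \<open>Free group words on x_0..x_(n-1): (j, True) = x_j, (j, False) = x_j^-1.
  Artin action of B_n on the free group F_n:
  sigma_i : x_i -> x_i x_(i+1) x_i^-1, x_(i+1) -> x_i, others fixed.\<close>
type_synonym fword = "(nat \<times> bool) list"

definition finv :: "fword \<Rightarrow> fword" where
  "finv u = rev (map (\<lambda>(j, e). (j, \<not> e)) u)"

definition artin_letter :: "nat \<times> bool \<Rightarrow> nat \<Rightarrow> fword" where
  "artin_letter g j = (case g of (i, e) \<Rightarrow>
     if e then (if j = i then [(i, True), (Suc i, True), (i, False)]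
                else if j = Suc i then [(i, True)] else [(j, True)])
     else (if j = i then [(Suc i, True)]
           else if j = Suc i then [(Suc i, False), (i, True), (Suc i, True)]
           else [(j, True)]))"

definition subst_word :: "(nat \<Rightarrow> fword) \<Rightarrow> fword \<Rightarrow> fword" where
  "subst_word f u = concat (map (\<lambda>(j, e). if e then f j else finv (f j)) u)"

definition artin_act :: "braid_word \<Rightarrow> nat \<Rightarrow> fword" where
  "artin_act w = foldr (\<lambda>g f. \<lambda>j. subst_word (artin_letter g) (f j)) w (\<lambda>j. [(j, True)])"

text \<open>Abelianized Fox derivative d/dx_j (x_k -> q), with values in Q(q).\<close>
fun fox_ab :: "nat \<Rightarrow> fword \<Rightarrow> qfield" where
  "fox_ab j [] = 0"
| "fox_ab j ((k, e) # u) =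
     (if k = j then (if e then 1 else - inverse qq) else 0)
     + (if e then qq else inverse qq) * fox_ab j u"

text \<open>The closed braid group presentation <x_0..x_(n-1) | artin_act w x_i = x_i>;
  relators r_i = artin_act w x_i * x_i^-1. Alexander polynomial of the closure (a knot):
  determinant of the Alexander matrix (abelianized Fox Jacobian) with the last relator and
  the last generator deleted; this is well defined up to units +-q^k.\<close>
definition alexander :: "nat \<Rightarrow> braid_word \<Rightarrow> qfield" where
  "alexander n w = det (mat (n - 1) (n - 1)
      (\<lambda>(i, j). fox_ab j (artin_act w i @ [(i, False)])))"

end

theory Submission
  imports Defs
begin


lemma mat_mult_entry:
  assumes "A \<in> carrier_mat n m" "B \<in> carrier_mat m k" "i < n" "j < k"
  shows "(A * B) $$ (i, j) = (\<Sum>l<m. A $$ (i, l) * B $$ (l, j))"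
  using assms by (auto simp: scalar_prod_def atLeast0LessThan intro!: sum.cong)

lemma sum_two:
  assumes "Suc a < n" "\<And>i. i < n \<Longrightarrow> i \<noteq> a \<Longrightarrow> i \<noteq> Suc a \<Longrightarrow> f i = 0"
  shows "(\<Sum>i<n. f i) = f a + f (Suc a)"
proof -
  have "(\<Sum>i<n. f i) = (\<Sum>i\<in>{a, Suc a}. f i)"
    by (rule sum.mono_neutral_right) (use assms in auto)
  then show ?thesis by simp
qed

lemma sum_one:
  fixes a n :: nat
  assumes "a < n" "\<And>i. i < n \<Longrightarrow> i \<noteq> a \<Longrightarrow> f i = 0"
  shows "(\<Sum>i<n. f i) = f a"
proof -
  have "(\<Sum>i<n. f i) = (\<Sum>i\<in>{a}. f i)"
    by (rule sum.mono_neutral_right) (use assms in auto)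
  then show ?thesis by simp
qed

lemma qq_nz: "qq \<noteq> 0"
  by (simp add: qq_def eq_fract Zero_fract_def)

lemma burau_gen_carrier: "burau_gen n g \<in> carrier_mat n n"
  by (simp add: burau_gen_def split: prod.splits)

lemma burau_Nil: "burau n [] = 1\<^sub>m n"
  by (simp add: burau_def)

lemma burau_Cons: "burau n (g # w) = burau_gen n g * burau n w"
  by (simp add: burau_def)

lemma burau_carrier: "burau n w \<in> carrier_mat n n"
  by (induction w) (auto simp: burau_Nil burau_Cons intro!: mult_carrier_mat[OF burau_gen_carrier])

lemma burau_gen_idx:
  "r < n \<Longrightarrow> c < n \<Longrightarrow> burau_gen n (i, e) $$ (r, c) =
       (if r = i \<and> c = i then (if e then 1 - qq else 0)
       else if r = i \<and> c = Suc i then (if e then 1 else inverse qq)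
       else if r = Suc i \<and> c = i then (if e then qq else 1)
       else if r = Suc i \<and> c = Suc i then (if e then 0 else 1 - inverse qq)
       else if r = c then 1 else 0)"
  by (simp add: burau_gen_def)

lemma burau_gen_colsum:
  assumes "Suc i < n" "c < n"
  shows "(\<Sum>r<n. burau_gen n (i, e) $$ (r, c)) = 1"
proof -
  consider "c = i" | "c = Suc i" | "c \<noteq> i" "c \<noteq> Suc i" by blast
  then show ?thesis
  proof cases
    case 1
    then show ?thesis using assms
      by (subst sum_two[of i]) (auto simp: burau_gen_idx)
  next
    case 2
    then show ?thesis using assms
      by (subst sum_two[of i]) (auto simp: burau_gen_idx)
  next
    case 3
    then show ?thesis using assms
      by (subst sum_one[of c]) (auto simp: burau_gen_idx)
  qed
qed

lemma burau_gen_eig: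
  assumes "Suc i < n" "r < n"
  shows "(\<Sum>c<n. burau_gen n (i, e) $$ (r, c) * qq ^ c) = qq ^ r"
proof -
  consider "r = i" | "r = Suc i" | "r \<noteq> i" "r \<noteq> Suc i" by blast
  then show ?thesis
  proof cases
    case 1
    then show ?thesis using assms qq_nz
      by (subst sum_two[of i]) (auto simp: burau_gen_idx algebra_simps)
  next
    case 2
    then show ?thesis using assms qq_nz
      by (subst sum_two[of i]) (auto simp: burau_gen_idx algebra_simps)
  next
    case 3
    then show ?thesis using assms
      by (subst sum_one[of r]) (auto simp: burau_gen_idx)
  qed
qed

lemma burau_colsum:
  assumes "braid_word n w" "j < n"
  shows "(\<Sum>r<n. burau n w $$ (r, j)) = 1"
  using assms
proof (induction w arbitrary: j)
  case Nil
  then show ?case by (simp add: burau_Nil sum_one[of j])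
next
  case (Cons g w)
  obtain i e where g: "g = (i, e)" by (cases g)
  have bw: "braid_word n w" and i: "Suc i < n" using Cons.prems g by (auto simp: braid_word_def)
  have "(\<Sum>r<n. burau n (g # w) $$ (r, j)) =
        (\<Sum>r<n. \<Sum>l<n. burau_gen n g $$ (r, l) * burau n w $$ (l, j))"
    by (rule sum.cong) (auto simp: burau_Cons mat_mult_entry[OF burau_gen_carrier burau_carrier] Cons.prems)
  also have "\<dots> = (\<Sum>l<n. (\<Sum>r<n. burau_gen n g $$ (r, l)) * burau n w $$ (l, j))"
    by (subst sum.swap) (simp add: sum_distrib_right)
  also have "\<dots> = (\<Sum>l<n. burau n w $$ (l, j))"
    by (rule sum.cong) (auto simp: g burau_gen_colsum[OF i])
  also have "\<dots> = 1" by (rule Cons.IH[OF bw Cons.prems(2)])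
  finally show ?case .
qed

lemma burau_eig:
  assumes "braid_word n w" "i < n"
  shows "(\<Sum>c<n. burau n w $$ (i, c) * qq ^ c) = qq ^ i"
  using assms
proof (induction w arbitrary: i)
  case Nil
  then show ?case by (simp add: burau_Nil sum_one[of i])
next
  case (Cons g w)
  obtain a e where g: "g = (a, e)" by (cases g)
  have bw: "braid_word n w" and a: "Suc a < n" using Cons.prems g by (auto simp: braid_word_def)
  have "(\<Sum>c<n. burau n (g # w) $$ (i, c) * qq ^ c) =
        (\<Sum>c<n. (\<Sum>l<n. burau_gen n g $$ (i, l) * burau n w $$ (l, c)) * qq ^ c)"
    by (rule sum.cong) (auto simp: burau_Cons mat_mult_entry[OF burau_gen_carrier burau_carrier] Cons.prems)
  also have "\<dots> = (\<Sum>l<n. burau_gen n g $$ (i, l) * (\<Sum>c<n. burau n w $$ (l, c) * qq ^ c))"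
    by (simp add: sum_distrib_right sum_distrib_left mult.assoc) (rule sum.swap)
  also have "\<dots> = (\<Sum>l<n. burau_gen n g $$ (i, l) * qq ^ l)"
    by (rule sum.cong) (auto simp: Cons.IH[OF bw])
  also have "\<dots> = qq ^ i" using g burau_gen_eig[OF a Cons.prems(2)] by simp
  finally show ?case .
qed



lemma sum_const_poly: "(\<Sum>l\<in>A. [:f l:]) = [:\<Sum>l\<in>A. f l:]"
  by (induction A rule: infinite_finite_induct) auto

lemma sum_lin_poly: "(\<Sum>l\<in>A. [:0, f l:]) = [:0, \<Sum>l\<in>A. f l:]"
  by (induction A rule: infinite_finite_induct) auto

lemma one_minus_x: "(1::'a::comm_ring_1 poly) - [:0, 1:] = [:1, -1:]"
  by (simp add: one_pCons)

lemma zeta_factor: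
  fixes B :: "qfield mat"
  assumes B: "B \<in> carrier_mat n n" and n: "n \<ge> 1"
    and cs: "\<And>j. j < n \<Longrightarrow> (\<Sum>r<n. B $$ (r, j)) = 1"
    and eig: "\<And>i. i < n \<Longrightarrow> (\<Sum>c<n. B $$ (i, c) * qq ^ c) = qq ^ i"
  shows "\<exists>h. det (1\<^sub>m n - map_mat (\<lambda>x. [:0, x:]) B) = [:-1, 1:] * h \<and>
             poly h 1 = - inverse (qq ^ (n - 1)) * qint n * det (mat_delete (1\<^sub>m n - B) (n - 1) (n - 1))"
proof -
  define N where "N = 1\<^sub>m n - map_mat (\<lambda>x. [:0, x:]) B"
  define R :: "qfield poly mat" where "R = mat n n (\<lambda>(i, j). if i = n - 1 then 1 else if i = j then 1 else 0)"
  define E :: "qfield poly mat" where "E = mat n n (\<lambda>(i, j). if j = n - 1 then [:qq ^ i:] else if i = j then 1 else 0)"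
  define NE where "NE = N * E"
  have Nc: "N \<in> carrier_mat n n" using B by (simp add: N_def minus_carrier_mat)
  have Rc: "R \<in> carrier_mat n n" by (simp add: R_def)
  have Ec: "E \<in> carrier_mat n n" by (simp add: E_def)
  have NEc: "NE \<in> carrier_mat n n" using Nc Ec by (simp add: NE_def)
  have Nidx: "N $$ (i, j) = (if i = j then 1 else 0) - [:0, B $$ (i, j):]" if "i < n" "j < n" for i j
    using that B by (simp add: N_def)
  have NEidx: "NE $$ (k, j) = (if j = n - 1 then [:qq ^ k:] * [:1, -1:] else N $$ (k, j))"
    if k: "k < n" and j: "j < n" for k j
  proof (cases "j = n - 1")
    case True
    have "NE $$ (k, j) = (\<Sum>l<n. N $$ (k, l) * E $$ (l, j))"
      unfolding NE_def by (rule mat_mult_entry[OF Nc Ec k j])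
    also have "\<dots> = (\<Sum>l<n. (if k = l then 1 else 0) * [:qq ^ l:] - [:0, B $$ (k, l) * qq ^ l:])"
      by (rule sum.cong) (use True k in \<open>auto simp: Nidx E_def algebra_simps\<close>)
    also have "\<dots> = [:qq ^ k:] - [:0, qq ^ k:]"
      by (simp add: sum_subtractf sum_lin_poly eig k sum_one[of k])
    also have "\<dots> = [:qq ^ k:] * [:1, -1:]" by simp
    finally show ?thesis using True by simp
  next
    case False
    have "NE $$ (k, j) = (\<Sum>l<n. N $$ (k, l) * E $$ (l, j))"
      unfolding NE_def by (rule mat_mult_entry[OF Nc Ec k j])
    also have "\<dots> = N $$ (k, j)"
      by (subst sum_one[of j]) (use False j in \<open>auto simp: E_def\<close>)
    finally show ?thesis using False by simp
  qed
  have Midx: "(R * NE) $$ (i, j) = (if i = n - 1 then (\<Sum>k<n. NE $$ (k, j)) else NE $$ (i, j))"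
    if i: "i < n" and j: "j < n" for i j
  proof -
    have "(R * NE) $$ (i, j) = (\<Sum>k<n. R $$ (i, k) * NE $$ (k, j))"
      by (rule mat_mult_entry[OF Rc NEc i j])
    also have "\<dots> = (if i = n - 1 then (\<Sum>k<n. NE $$ (k, j)) else NE $$ (i, j))"
    proof (cases "i = n - 1")
      case True
      then show ?thesis using i by (auto simp: R_def intro!: sum.cong)
    next
      case False
      then show ?thesis by (subst sum_one[of i]) (use i in \<open>auto simp: R_def\<close>)
    qed
    finally show ?thesis .
  qed
  define M' where "M' = mat n n (\<lambda>(i, j). if i = n - 1 then (if j = n - 1 then [:qint n:] else 1)
                                       else (R * NE) $$ (i, j))"
  have M'c: "M' \<in> carrier_mat n n" by (simp add: M'_def)
  have RNE: "R * NE = multrow (n - 1) [:1, -1:] M'"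
  proof (rule eq_matI)
    fix i j assume i: "i < dim_row (multrow (n - 1) [:1, -1:] M')" and j: "j < dim_col (multrow (n - 1) [:1, -1:] M')"
    then have i: "i < n" and j: "j < n" by (auto simp: M'_def)
    show "(R * NE) $$ (i, j) = multrow (n - 1) [:1, -1:] M' $$ (i, j)"
    proof (cases "i = n - 1")
      case False
      then show ?thesis using i j by (simp add: M'_def)
    next
      case True
      have "(R * NE) $$ (i, j) = (\<Sum>k<n. NE $$ (k, j))" using Midx[OF i j] True by simp
      also have "\<dots> = [:1, -1:] * (if j = n - 1 then [:qint n:] else 1)"
      proof (cases "j = n - 1")
        case True
        have "(\<Sum>k<n. NE $$ (k, j)) = (\<Sum>k<n. [:qq ^ k:] * [:1, -1:])"
          by (rule sum.cong) (simp_all add: NEidx j True)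
        also have "\<dots> = (\<Sum>k<n. [:qq ^ k:]) * [:1, -1:]"
          by (rule sum_distrib_right[symmetric])
        also have "\<dots> = [:1, -1:] * [:qint n:]"
          by (simp add: sum_const_poly qint_def mult.commute)
        finally show ?thesis using True by simp
      next
        case False
        have "(\<Sum>k<n. NE $$ (k, j)) = (\<Sum>k<n. (if k = j then 1 else 0) - [:0, B $$ (k, j):])"
          by (rule sum.cong) (use False j in \<open>auto simp: NEidx Nidx\<close>)
        also have "\<dots> = 1 - [:0, 1:]"
          by (simp add: sum_subtractf sum_lin_poly cs j sum_one[of j])
        finally show ?thesis using False by (simp add: one_minus_x)
      qed
      finally show ?thesis using True i j by (simp add: M'_def)
    qed
  qed (use Rc NEc in \<open>auto simp: M'_def\<close>)
  have detR: "det R = 1"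
  proof -
    have "det R = prod_list (diag_mat R)"
      by (rule det_lower_triangular[OF _ Rc]) (auto simp: R_def)
    also have "\<dots> = 1" by (auto simp: prod_list_diag_prod R_def intro!: prod.neutral)
    finally show ?thesis .
  qed
  have detE: "det E = [:qq ^ (n - 1):]"
  proof -
    have "det E = prod_list (diag_mat E)"
      by (rule det_upper_triangular[OF _ Ec]) (auto simp: E_def)
    also have "\<dots> = (\<Prod>i<n. if i = n - 1 then [:qq ^ (n - 1):] else 1)"
      by (simp add: prod_list_diag_prod E_def atLeast0LessThan cong: if_cong)
    also have "\<dots> = [:qq ^ (n - 1):]"
      using n by (subst prod.remove[of _ "n - 1"]) auto
    finally show ?thesis .
  qed
  have "det (R * NE) = det N * [:qq ^ (n - 1):]"
    unfolding NE_def using Rc Nc Ec by (simp add: det_mult[OF Rc] det_mult[OF Nc Ec] detR detE)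
  moreover have "det (R * NE) = [:1, -1:] * det M'"
    unfolding RNE using n M'c by (subst det_multrow) auto
  ultimately have key: "det N * [:qq ^ (n - 1):] = [:1, -1:] * det M'" by simp
  define h where "h = smult (- inverse (qq ^ (n - 1))) (det M')"
  have qn: "qq ^ (n - 1) \<noteq> 0" using qq_nz by simp
  have m1: "[:-1, 1:] = - [:1, -1::qfield:]" by simp
  have "[:-1, 1:] * h = smult (- inverse (qq ^ (n - 1))) ([:-1, 1:] * det M')"
    unfolding h_def by (rule mult_smult_right)
  also have "\<dots> = smult (inverse (qq ^ (n - 1))) ([:1, -1:] * det M')"
    unfolding m1 by (simp only: mult_minus_left smult_minus_right smult_minus_left minus_minus)
  also have "\<dots> = smult (inverse (qq ^ (n - 1))) (det N * [:qq ^ (n - 1):])" by (simp only: key)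
  also have "\<dots> = det N" using qn by (simp add: mult.commute)
  finally have fac: "det N = [:-1, 1:] * h" by simp
  interpret ev: comm_ring_hom "\<lambda>p::qfield poly. poly p 1" by unfold_locales auto
  define M1 where "M1 = map_mat (\<lambda>p. poly p 1) M'"
  have M1c: "M1 \<in> carrier_mat n n" using M'c by (simp add: M1_def)
  have "poly h 1 = - inverse (qq ^ (n - 1)) * det M1"
    by (simp add: h_def M1_def)
  have lap: "det M1 = (\<Sum>i<n. M1 $$ (i, n - 1) * cofactor M1 i (n - 1))"
    by (rule laplace_expansion_column[OF M1c]) (use n in auto)
  also have "\<dots> = M1 $$ (n - 1, n - 1) * cofactor M1 (n - 1) (n - 1)"
    by (rule sum_one) (use n in \<open>auto simp: M1_def M'_def Midx NEidx\<close>)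
  also have "\<dots> = qint n * det (mat_delete M1 (n - 1) (n - 1))"
    using n by (simp add: M1_def M'_def cofactor_def)
  also have "mat_delete M1 (n - 1) (n - 1) = mat_delete (1\<^sub>m n - B) (n - 1) (n - 1)"
    by (rule eq_matI) (use B in \<open>auto simp: mat_delete_def M1_def M'_def Midx NEidx Nidx\<close>)
  finally show ?thesis
    using \<open>poly h 1 = _\<close> fac by (auto simp: N_def)
qed



fun qex :: "fword \<Rightarrow> qfield" where
  "qex [] = 1"
| "qex ((j, e) # u) = (if e then qq else inverse qq) * qex u"

lemma qex_append: "qex (u @ v) = qex u * qex v"
  by (induction u rule: qex.induct) auto

lemma qex_nz: "qex u \<noteq> 0"
  by (induction u rule: qex.induct) (auto simp: qq_nz)

lemma finv_Nil: "finv [] = []" by (simp add: finv_def)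
lemma finv_Cons: "finv ((j, e) # u) = finv u @ [(j, \<not> e)]" by (simp add: finv_def)

lemma qex_finv: "qex (finv u) = inverse (qex u)"
  by (induction u rule: qex.induct) (auto simp: finv_Nil finv_Cons qex_append qq_nz)

lemma fox_append: "fox_ab k (u @ v) = fox_ab k u + qex u * fox_ab k v"
  by (induction u rule: qex.induct) (auto simp: algebra_simps)

lemma fox_finv: "fox_ab k (finv u) = - inverse (qex u) * fox_ab k u"
proof (induction u rule: qex.induct)
  case 1
  then show ?case by (simp add: finv_Nil)
next
  case (2 j e u)
  have qn: "qex u \<noteq> 0" by (rule qex_nz)
  show ?case using 2 qq_nz qn
    by (auto simp: finv_Cons fox_append qex_finv field_simps)
qed

lemma subst_word_Nil: "subst_word f [] = []" by (simp add: subst_word_def)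
lemma subst_word_Cons: "subst_word f ((j, e) # u) = (if e then f j else finv (f j)) @ subst_word f u"
  by (simp add: subst_word_def)

lemma qex_subst:
  assumes "\<And>m. qex (f m) = qq"
  shows "qex (subst_word f u) = qex u"
  by (induction u rule: qex.induct) (auto simp: subst_word_Nil subst_word_Cons qex_append qex_finv assms)

definition wfw :: "nat \<Rightarrow> fword \<Rightarrow> bool" where
  "wfw n u \<longleftrightarrow> (\<forall>(j, e) \<in> set u. j < n)"

lemma wfw_finv: "wfw n (finv u) = wfw n u"
  by (auto simp: wfw_def finv_def)

lemma wfw_append: "wfw n (u @ v) \<longleftrightarrow> wfw n u \<and> wfw n v" by (auto simp: wfw_def)
lemma wfw_Cons: "wfw n ((j, e) # u) \<longleftrightarrow> j < n \<and> wfw n u" by (simp add: wfw_def)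
lemma wfw_Nil: "wfw n []" by (simp add: wfw_def)

lemma wfw_subst:
  assumes "wfw n u" "\<And>m. m < n \<Longrightarrow> wfw n (f m)"
  shows "wfw n (subst_word f u)"
  using assms(1)
  by (induction u rule: qex.induct)
     (auto simp: subst_word_Nil subst_word_Cons wfw_finv assms(2) wfw_append wfw_Cons wfw_Nil)

lemma fox_chain:
  assumes "\<And>m. qex (f m) = qq" "wfw n u"
  shows "fox_ab k (subst_word f u) = (\<Sum>m<n. fox_ab m u * fox_ab k (f m))"
  using assms(2)
proof (induction u rule: qex.induct)
  case 1
  then show ?case by (simp add: subst_word_Nil)
next
  case (2 j e u)
  have j: "j < n" and wu: "wfw n u" using 2(2) by (auto simp: wfw_def)
  have IH: "fox_ab k (subst_word f u) = (\<Sum>m<n. fox_ab m u * fox_ab k (f m))"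
    by (rule 2(1)[OF wu])
  have sd: "(\<Sum>m<n. (if j = m then c else 0) * fox_ab k (f m)) = c * fox_ab k (f j)" for c
    by (subst sum_one[of j]) (use j in auto)
  show ?case
  proof (cases e)
    case True
    have "(\<Sum>m<n. fox_ab m ((j, e) # u) * fox_ab k (f m)) =
          (\<Sum>m<n. (if j = m then 1 else 0) * fox_ab k (f m)) + qq * (\<Sum>m<n. fox_ab m u * fox_ab k (f m))"
      using True by (simp add: sum.distrib sum_distrib_left algebra_simps)
    then show ?thesis using True
      by (simp add: subst_word_Cons fox_append assms(1) IH sd)
  next
    case False
    have "(\<Sum>m<n. fox_ab m ((j, e) # u) * fox_ab k (f m)) =
          (\<Sum>m<n. (if j = m then - inverse qq else 0) * fox_ab k (f m)) + inverse qq * (\<Sum>m<n. fox_ab m u * fox_ab k (f m))"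
      using False by (simp add: sum.distrib sum_distrib_left algebra_simps)
    then show ?thesis using False
      by (simp add: subst_word_Cons fox_append fox_finv qex_finv assms(1) IH sd)
  qed
qed

lemma qex_artin_letter: "qex (artin_letter g m) = qq"
  using qq_nz by (cases g) (auto simp: artin_letter_def)

lemma wfw_artin_letter: "Suc (fst g) < n \<Longrightarrow> m < n \<Longrightarrow> wfw n (artin_letter g m)"
  by (cases g) (auto simp: artin_letter_def wfw_def)

lemma fox_artin_letter:
  assumes "Suc i < n" "k < n" "m < n"
  shows "fox_ab k (artin_letter (i, e) m) = burau_gen n (i, e) $$ (k, m)"
  using assms qq_nz by (auto simp: artin_letter_def burau_gen_idx field_simps)

lemma artin_act_Nil: "artin_act [] j = [(j, True)]" by (simp add: artin_act_def)
lemma artin_act_Cons: "artin_act (g # w) j = subst_word (artin_letter g) (artin_act w j)"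
  by (simp add: artin_act_def)

lemma artin_main:
  assumes "braid_word n w" "j < n"
  shows "wfw n (artin_act w j) \<and> qex (artin_act w j) = qq \<and>
         (\<forall>k<n. fox_ab k (artin_act w j) = burau n w $$ (k, j))"
  using assms
proof (induction w arbitrary: j)
  case Nil
  then show ?case by (auto simp: artin_act_Nil burau_Nil wfw_def)
next
  case (Cons g w)
  obtain i e where g: "g = (i, e)" by (cases g)
  have bw: "braid_word n w" and i: "Suc i < n" using Cons.prems g by (auto simp: braid_word_def)
  note IH = Cons.IH[OF bw Cons.prems(2)]
  have wf: "wfw n (artin_act (g # w) j)"
    unfolding artin_act_Cons by (rule wfw_subst) (use IH wfw_artin_letter[of g n] g i in auto)
  have qx: "qex (artin_act (g # w) j) = qq"
    unfolding artin_act_Cons by (simp add: qex_subst qex_artin_letter IH)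
  have fx: "fox_ab k (artin_act (g # w) j) = burau n (g # w) $$ (k, j)" if k: "k < n" for k
  proof -
    have "fox_ab k (artin_act (g # w) j) = (\<Sum>m<n. fox_ab m (artin_act w j) * fox_ab k (artin_letter g m))"
      unfolding artin_act_Cons by (rule fox_chain) (use IH qex_artin_letter in auto)
    also have "\<dots> = (\<Sum>m<n. burau_gen n g $$ (k, m) * burau n w $$ (m, j))"
      by (rule sum.cong) (use IH g i k fox_artin_letter in auto)
    also have "\<dots> = burau n (g # w) $$ (k, j)"
      by (simp add: burau_Cons mat_mult_entry[OF burau_gen_carrier burau_carrier k Cons.prems(2)])
    finally show ?thesis .
  qed
  show ?case using wf qx fx by blast
qed

lemma alexander_eq:
  assumes "braid_word n w"
  shows "alexander n w = det (mat (n - 1) (n - 1) (\<lambda>(i, j). burau n w $$ (j, i) - (if i = j then 1 else 0)))"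
proof -
  have "mat (n - 1) (n - 1) (\<lambda>(i, j). fox_ab j (artin_act w i @ [(i, False)])) =
        mat (n - 1) (n - 1) (\<lambda>(i, j). burau n w $$ (j, i) - (if i = j then 1 else 0))"
  proof (rule eq_matI)
    fix i j assume "i < dim_row (mat (n - 1) (n - 1) (\<lambda>(i, j). burau n w $$ (j, i) - (if i = j then 1 else 0)))"
      "j < dim_col (mat (n - 1) (n - 1) (\<lambda>(i, j). burau n w $$ (j, i) - (if i = j then 1 else 0)))"
    then have i: "i < n" and j: "j < n" and i1: "i < n - 1" and j1: "j < n - 1" by auto
    note am = artin_main[OF assms i]
    show "mat (n - 1) (n - 1) (\<lambda>(i, j). fox_ab j (artin_act w i @ [(i, False)])) $$ (i, j) =
          mat (n - 1) (n - 1) (\<lambda>(i, j). burau n w $$ (j, i) - (if i = j then 1 else 0)) $$ (i, j)"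
      using am i1 j1 j qq_nz by (auto simp: fox_append)
  qed auto
  then show ?thesis by (simp add: alexander_def)
qed



interpretation tf: inj_comm_ring_hom "to_fract :: rat poly \<Rightarrow> rat poly fract"
  by unfold_locales auto

interpretation evr: comm_ring_hom "\<lambda>p::rat poly. poly p 1"
  by unfold_locales auto

abbreviation XX :: "rat poly" where "XX \<equiv> [:0, 1:]"

lemma tf_X: "to_fract XX = qq"
  by (simp add: qq_def to_fract_def)

definition gp :: "nat \<Rightarrow> nat \<times> bool \<Rightarrow> rat poly mat" where
  "gp n g = (case g of (i, e) \<Rightarrow>
     mat n n (\<lambda>(r, c).
       if r = i \<and> c = i then (if e then 1 - XX else 0)
       else if r = i \<and> c = Suc i then 1
       else if r = Suc i \<and> c = i then XX
       else if r = Suc i \<and> c = Suc i then (if e then 0 else XX - 1)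
       else if r = c then (if e then 1 else XX) else 0))"

definition cg :: "bool \<Rightarrow> qfield" where "cg e = (if e then 1 else inverse qq)"
definition dg :: "bool \<Rightarrow> rat poly" where "dg e = (if e then 1 else XX)"

definition Bp :: "nat \<Rightarrow> braid_word \<Rightarrow> rat poly mat" where
  "Bp n w = foldr (\<lambda>g M. gp n g * M) w (1\<^sub>m n)"

definition cw :: "braid_word \<Rightarrow> qfield" where "cw w = (\<Prod>g\<leftarrow>w. cg (snd g))"
definition dw :: "braid_word \<Rightarrow> rat poly" where "dw w = (\<Prod>g\<leftarrow>w. dg (snd g))"

lemma gp_carrier: "gp n g \<in> carrier_mat n n"
  by (simp add: gp_def split: prod.splits)

lemma Bp_Nil: "Bp n [] = 1\<^sub>m n" by (simp add: Bp_def)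
lemma Bp_Cons: "Bp n (g # w) = gp n g * Bp n w" by (simp add: Bp_def)

lemma Bp_carrier: "Bp n w \<in> carrier_mat n n"
  by (induction w) (auto simp: Bp_Nil Bp_Cons intro!: mult_carrier_mat[OF gp_carrier])

lemma cg_dg: "cg e * to_fract (dg e) = 1"
  by (simp add: cg_def dg_def tf_X qq_nz)

lemma cw_dw: "cw w * to_fract (dw w) = 1"
proof (induction w)
  case Nil
  then show ?case by (simp add: cw_def dw_def)
next
  case (Cons g w)
  have "cw (g # w) * to_fract (dw (g # w)) = (cg (snd g) * to_fract (dg (snd g))) * (cw w * to_fract (dw w))"
    by (simp add: cw_def dw_def mult_ac)
  then show ?case by (simp add: cg_dg Cons.IH)
qed

lemma poly_dw: "poly (dw w) 1 = 1"
  by (induction w) (auto simp: dw_def dg_def)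

lemma burau_gen_gp: "burau_gen n (i, e) = cg e \<cdot>\<^sub>m map_mat to_fract (gp n (i, e))"
  by (rule eq_matI) (auto simp: burau_gen_def gp_def cg_def tf_X qq_nz field_simps)

lemma burau_Bp: "burau n w = cw w \<cdot>\<^sub>m map_mat to_fract (Bp n w)"
proof (induction w)
  case Nil
  then show ?case by (auto simp: burau_Nil Bp_Nil cw_def tf.mat_hom_one)
next
  case (Cons g w)
  obtain i e where g: "g = (i, e)" by (cases g)
  have c1: "map_mat to_fract (gp n g) \<in> carrier_mat n n" using gp_carrier by simp
  have c2: "map_mat to_fract (Bp n w) \<in> carrier_mat n n" using Bp_carrier by simp
  have "burau n (g # w) = (cg e \<cdot>\<^sub>m map_mat to_fract (gp n g)) * (cw w \<cdot>\<^sub>m map_mat to_fract (Bp n w))"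
    by (simp add: burau_Cons Cons.IH g burau_gen_gp)
  also have "\<dots> = cg e \<cdot>\<^sub>m (map_mat to_fract (gp n g) * (cw w \<cdot>\<^sub>m map_mat to_fract (Bp n w)))"
    by (rule mult_smult_assoc_mat[OF c1, of _ n]) (use c2 in simp)
  also have "\<dots> = cg e \<cdot>\<^sub>m (cw w \<cdot>\<^sub>m (map_mat to_fract (gp n g) * map_mat to_fract (Bp n w)))"
    by (simp add: mult_smult_distrib[OF c1 c2])
  also have "\<dots> = (cg e * cw w) \<cdot>\<^sub>m (map_mat to_fract (gp n g) * map_mat to_fract (Bp n w))"
    by (rule eq_matI) auto
  also have "\<dots> = cw (g # w) \<cdot>\<^sub>m map_mat to_fract (Bp n (g # w))"
    by (simp add: Bp_Cons tf.mat_hom_mult[OF gp_carrier Bp_carrier] cw_def g)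
  finally show ?case .
qed

definition Sm :: "nat \<Rightarrow> (nat \<Rightarrow> nat) \<Rightarrow> rat mat" where
  "Sm n p = mat n n (\<lambda>(r, c). if r = p c then 1 else 0)"

lemma swap_lt: "Suc i < n \<Longrightarrow> c < n \<Longrightarrow> swap_adj i c < n"
  by (simp add: swap_adj_def)

lemma braid_perm_Nil: "braid_perm [] = id" by (simp add: braid_perm_def)
lemma braid_perm_Cons: "braid_perm (g # w) = swap_adj (fst g) \<circ> braid_perm w"
  by (simp add: braid_perm_def)

lemma braid_perm_lt: "braid_word n w \<Longrightarrow> c < n \<Longrightarrow> braid_perm w c < n"
  by (induction w) (auto simp: braid_perm_Nil braid_perm_Cons braid_word_def swap_adj_def)

lemma swap_adj_inj: "inj (swap_adj i)"
  by (rule injI) (auto simp: swap_adj_def split: if_splits)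

lemma braid_perm_inj: "inj (braid_perm w)"
proof (induction w)
  case Nil
  then show ?case by (simp add: braid_perm_Nil)
next
  case (Cons g w)
  show ?case unfolding braid_perm_Cons by (rule inj_compose[OF swap_adj_inj Cons.IH])
qed

lemma ev_gp: "Suc i < n \<Longrightarrow> map_mat (\<lambda>p. poly p 1) (gp n (i, e)) = Sm n (swap_adj i)"
  by (rule eq_matI) (auto simp: gp_def Sm_def swap_adj_def)

lemma ev_Bp: "braid_word n w \<Longrightarrow> map_mat (\<lambda>p. poly p 1) (Bp n w) = Sm n (braid_perm w)"
proof (induction w)
  case Nil
  then show ?case by (rule_tac eq_matI) (auto simp: Bp_Nil Sm_def braid_perm_Nil)
next
  case (Cons g w)
  obtain i e where g: "g = (i, e)" by (cases g)
  have bw: "braid_word n w" and i: "Suc i < n" using Cons.prems g by (auto simp: braid_word_def)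
  have "map_mat (\<lambda>p. poly p 1) (Bp n (g # w)) = Sm n (swap_adj i) * Sm n (braid_perm w)"
    by (simp add: Bp_Cons evr.mat_hom_mult[OF gp_carrier Bp_carrier] Cons.IH[OF bw] g ev_gp[OF i])
  also have "\<dots> = Sm n (braid_perm (g # w))"
  proof (rule eq_matI)
    fix r c assume "r < dim_row (Sm n (braid_perm (g # w)))" "c < dim_col (Sm n (braid_perm (g # w)))"
    then have r: "r < n" and c: "c < n" by (auto simp: Sm_def)
    have pc: "braid_perm w c < n" by (rule braid_perm_lt[OF bw c])
    have "(Sm n (swap_adj i) * Sm n (braid_perm w)) $$ (r, c) =
          (\<Sum>l<n. Sm n (swap_adj i) $$ (r, l) * Sm n (braid_perm w) $$ (l, c))"
      by (rule mat_mult_entry[OF _ _ r c]) (auto simp: Sm_def)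
    also have "\<dots> = Sm n (swap_adj i) $$ (r, braid_perm w c) * 1"
      by (subst sum_one[of "braid_perm w c"]) (use pc c in \<open>auto simp: Sm_def\<close>)
    also have "\<dots> = Sm n (braid_perm (g # w)) $$ (r, c)"
      using r c pc by (simp add: Sm_def braid_perm_Cons g)
    finally show "(Sm n (swap_adj i) * Sm n (braid_perm w)) $$ (r, c) = Sm n (braid_perm (g # w)) $$ (r, c)" .
  qed (auto simp: Sm_def)
  finally show ?case .
qed



lemma perm_kernel:
  fixes p :: "nat \<Rightarrow> nat" and x :: "nat \<Rightarrow> 'a::zero"
  assumes n: "n \<ge> 1" and lt: "\<And>c. c < n \<Longrightarrow> p c < n" and inj: "inj p"
    and tr: "\<And>j. j < n \<Longrightarrow> \<exists>k. (p ^^ k) 0 = j"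
    and x0: "x (n - 1) = 0" and step: "\<And>y. y < n \<Longrightarrow> p y \<noteq> n - 1 \<Longrightarrow> x (p y) = x y"
    and i: "i < n"
  shows "x i = 0"
proof -
  have orb: "x ((p ^^ k) (n - 1)) = 0 \<and> (p ^^ k) (n - 1) < n" for k
  proof (induction k)
    case 0
    then show ?case using x0 n by simp
  next
    case (Suc k)
    define y where "y = (p ^^ k) (n - 1)"
    have y: "y < n" "x y = 0" using Suc y_def by auto
    have "x (p y) = 0"
    proof (cases "p y = n - 1")
      case True then show ?thesis using x0 by simp
    next
      case False then show ?thesis using step[OF y(1)] y by simp
    qed
    then show ?case using lt[OF y(1)] by (simp add: y_def)
  qed
  have lt0: "(p ^^ k) 0 < n" for k
    by (induction k) (use n lt in auto)
  have ninj: "\<not> inj_on (\<lambda>k. (p ^^ k) 0) {0..n}"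
  proof
    assume "inj_on (\<lambda>k. (p ^^ k) 0) {0..n}"
    then have "card {0..n} \<le> card {..<n}"
      by (rule card_inj_on_le) (use lt0 in auto)
    then show False by simp
  qed
  obtain a b where ab: "a < b" "(p ^^ a) 0 = (p ^^ b) 0"
  proof -
    obtain a b where "a \<in> {0..n}" "b \<in> {0..n}" "a \<noteq> b" "(p ^^ a) 0 = (p ^^ b) 0"
      using ninj unfolding inj_on_def by blast
    then show ?thesis using that by (cases "a < b") (auto simp: not_less_iff_gr_or_eq)
  qed
  define q where "q = b - a"
  have q1: "q \<ge> 1" using ab by (simp add: q_def)
  have "(p ^^ a) ((p ^^ q) 0) = (p ^^ (a + q)) 0"
    by (simp add: funpow_add)
  also have "a + q = b" using ab by (simp add: q_def)
  finally have "(p ^^ a) ((p ^^ q) 0) = (p ^^ b) 0" .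
  then have "(p ^^ a) ((p ^^ q) 0) = (p ^^ a) 0" using ab by simp
  then have per: "(p ^^ q) 0 = 0" using inj_fn[OF inj, of a] by (auto dest: injD)
  have perm: "(p ^^ (q * m)) 0 = 0" for m
  proof (induction m)
    case 0 then show ?case by simp
  next
    case (Suc m)
    have "(p ^^ (q * Suc m)) 0 = (p ^^ q) ((p ^^ (q * m)) 0)"
      by (simp add: funpow_add)
    then show ?case using Suc per by simp
  qed
  obtain a' where a': "(p ^^ a') 0 = i" using tr[OF i] by blast
  obtain b' where b': "(p ^^ b') 0 = n - 1" using tr[of "n - 1"] n by auto
  have qb: "q * b' \<ge> b'" using q1 by simp
  have e1: "a' + q * b' - b' + b' = a' + q * b'" using qb by arith
  have "(p ^^ (a' + q * b' - b')) ((p ^^ b') 0) = (p ^^ (a' + q * b' - b' + b')) 0"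
    by (simp add: funpow_add)
  also have "\<dots> = (p ^^ (a' + q * b')) 0" by (simp only: e1)
  also have "\<dots> = (p ^^ a') ((p ^^ (q * b')) 0)" by (simp add: funpow_add)
  also have "\<dots> = i" using perm a' by simp
  finally have "(p ^^ (a' + q * b' - b')) (n - 1) = i" using b' by simp
  then show ?thesis using orb[of "a' + q * b' - b'"] by simp
qed

lemma Z_nonsing:
  fixes p :: "nat \<Rightarrow> nat"
  assumes n: "n \<ge> 1" and lt: "\<And>c. c < n \<Longrightarrow> p c < n" and inj: "inj p"
    and tr: "\<And>j. j < n \<Longrightarrow> \<exists>k. (p ^^ k) 0 = j"
  shows "det (mat (n - 1) (n - 1) (\<lambda>(i, j). (if i = j then 1 else 0) - (if i = p j then 1 else 0)) :: rat mat) \<noteq> 0"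
proof
  define Z :: "rat mat" where "Z = mat (n - 1) (n - 1) (\<lambda>(i, j). (if i = j then 1 else 0) - (if i = p j then 1 else 0))"
  assume "det (mat (n - 1) (n - 1) (\<lambda>(i, j). (if i = j then 1 else 0) - (if i = p j then 1 else 0)) :: rat mat) = 0"
  then have "det Z = 0" by (simp add: Z_def)
  then obtain v where v: "v \<in> carrier_vec (n - 1)" "v \<noteq> 0\<^sub>v (n - 1)" "Z *\<^sub>v v = 0\<^sub>v (n - 1)"
    using det_0_iff_vec_prod_zero_field[of Z "n - 1"] by (auto simp: Z_def)
  define x where "x i = (if i < n - 1 then v $ i else 0)" for i
  have step: "x (p y) = x y" if y: "y < n" and py: "p y \<noteq> n - 1" for y
  proof -
    have r: "p y < n - 1" using lt[OF y] py by simp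
    have "0 = (Z *\<^sub>v v) $ p y" using v(3) r by simp
    also have "\<dots> = (\<Sum>j<n - 1. Z $$ (p y, j) * v $ j)"
      using r v(1) by (simp add: Z_def scalar_prod_def atLeast0LessThan)
    also have "\<dots> = (\<Sum>j<n - 1. (if p y = j then v $ j else 0) - (if p y = p j then v $ j else 0))"
      using r by (auto simp: Z_def intro!: sum.cong)
    also have "\<dots> = v $ p y - (\<Sum>j<n - 1. (if p y = p j then v $ j else 0))"
      using r by (simp add: sum_subtractf)
    also have "(\<Sum>j<n - 1. (if p y = p j then v $ j else 0)) = x y"
    proof (cases "y < n - 1")
      case True
      then show ?thesis
        by (subst sum_one[of y]) (use inj in \<open>auto simp: x_def dest: injD\<close>)
    next
      case False
      then show ?thesis
        by (subst sum.neutral) (use inj in \<open>auto simp: x_def dest: injD\<close>)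
    qed
    finally show ?thesis using r by (simp add: x_def)
  qed
  have xi: "x i = 0" if "i < n" for i
    by (rule perm_kernel[where x = x, OF n lt inj tr _ step that]) (auto simp: x_def)
  have "v = 0\<^sub>v (n - 1)"
  proof (rule eq_vecI)
    fix i assume "i < dim_vec (0\<^sub>v (n - 1) :: rat vec)"
    then have i: "i < n - 1" by simp
    then have "x i = 0" by (intro xi) simp
    then show "v $ i = 0\<^sub>v (n - 1) $ i" using i by (simp add: x_def)
  qed (use v(1) in simp)
  with v(2) show False by simp
qed

lemma minor_nz:
  assumes n: "n \<ge> 1" and bw: "braid_word n w" and kn: "closure_is_knot n w"
  shows "det (mat_delete (1\<^sub>m n - burau n w) (n - 1) (n - 1)) \<noteq> 0"
proof -
  define Y where "Y = mat (n - 1) (n - 1) (\<lambda>(i, j). (if i = j then dw w else 0) - Bp n w $$ (i, j))"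
  have cw0: "cw w \<noteq> 0" using cw_dw[of w] by auto
  have md: "mat_delete (1\<^sub>m n - burau n w) (n - 1) (n - 1) = cw w \<cdot>\<^sub>m map_mat to_fract Y"
  proof (rule eq_matI)
    fix i j assume ij: "i < dim_row (cw w \<cdot>\<^sub>m map_mat to_fract Y)" "j < dim_col (cw w \<cdot>\<^sub>m map_mat to_fract Y)"
    then have i: "i < n - 1" and j: "j < n - 1" by (auto simp: Y_def)
    have bij: "burau n w $$ (i, j) = cw w * to_fract (Bp n w $$ (i, j))"
      using i j Bp_carrier[of n w] by (simp add: burau_Bp)
    show "mat_delete (1\<^sub>m n - burau n w) (n - 1) (n - 1) $$ (i, j) = (cw w \<cdot>\<^sub>m map_mat to_fract Y) $$ (i, j)"
      using i j burau_carrier[of n w] cw_dw[of w] by (auto simp: mat_delete_def Y_def bij algebra_simps)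
  next
    show "dim_row (mat_delete (1\<^sub>m n - burau n w) (n - 1) (n - 1)) = dim_row (cw w \<cdot>\<^sub>m map_mat to_fract Y)"
      using burau_carrier[of n w] by (simp add: Y_def)
    show "dim_col (mat_delete (1\<^sub>m n - burau n w) (n - 1) (n - 1)) = dim_col (cw w \<cdot>\<^sub>m map_mat to_fract Y)"
      using burau_carrier[of n w] by (simp add: Y_def)
  qed
  have detY: "det Y \<noteq> 0"
  proof
    assume "det Y = 0"
    then have "poly (det Y) 1 = 0" by simp
    then have "det (map_mat (\<lambda>p. poly p 1) Y) = 0" by simp
    moreover have "map_mat (\<lambda>p. poly p 1) Y =
        mat (n - 1) (n - 1) (\<lambda>(i, j). (if i = j then 1 else 0) - (if i = braid_perm w j then 1 else 0))"
    proof (rule eq_matI)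
      fix i j assume "i < dim_row (mat (n - 1) (n - 1) (\<lambda>(i, j). (if i = j then 1 else 0) - (if i = braid_perm w j then 1 else (0::rat))))"
        "j < dim_col (mat (n - 1) (n - 1) (\<lambda>(i, j). (if i = j then 1 else 0) - (if i = braid_perm w j then 1 else (0::rat))))"
      then have i: "i < n - 1" and j: "j < n - 1" by auto
      have "poly (Bp n w $$ (i, j)) 1 = map_mat (\<lambda>p. poly p 1) (Bp n w) $$ (i, j)"
        using i j Bp_carrier[of n w] by simp
      also have "\<dots> = (if i = braid_perm w j then 1 else 0)"
        using i j by (simp add: ev_Bp[OF bw] Sm_def)
      finally show "map_mat (\<lambda>p. poly p 1) Y $$ (i, j) =
          mat (n - 1) (n - 1) (\<lambda>(i, j). (if i = j then 1 else 0) - (if i = braid_perm w j then 1 else 0)) $$ (i, j)"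
        using i j by (simp add: Y_def poly_dw)
    qed (auto simp: Y_def)
    ultimately show False
      using Z_nonsing[OF n braid_perm_lt[OF bw] braid_perm_inj] kn by (auto simp: closure_is_knot_def)
  qed
  have "det (mat_delete (1\<^sub>m n - burau n w) (n - 1) (n - 1)) = cw w ^ (n - 1) * to_fract (det Y)"
    unfolding md by (simp add: Y_def)
  then show ?thesis using cw0 detY by simp
qed



lemma qint_nz: assumes "n \<ge> 1" shows "qint n \<noteq> 0"
proof -
  have e: "qint n = to_fract (\<Sum>i<n. XX ^ i)"
    by (simp only: qint_def tf.hom_sum tf.hom_power tf_X)
  have "poly (\<Sum>i<n. XX ^ i) 1 = of_nat n"
    by (simp add: poly_sum)
  then have "(\<Sum>i<n. XX ^ i) \<noteq> 0" using assms by auto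
  then show ?thesis unfolding e using to_fract_eq_0_iff by blast
qed

theorem theorem1p2:
  fixes n :: nat and w :: braid_word
  assumes "n \<ge> 1" and "braid_word n w" and "closure_is_knot n w"
  shows "\<exists>(\<epsilon>::qfield)\<in>{1, -1}. \<exists>k::int.
           simple_pole_residue (braid_zeta n w) 1
             (- (1 / qint n) * inverse (\<epsilon> * qq powi k * alexander n w))"
proof -
  define B where "B = burau n w"
  have Bc: "B \<in> carrier_mat n n" by (simp add: B_def burau_carrier)
  obtain h where zf: "det (1\<^sub>m n - map_mat (\<lambda>x. [:0, x:]) B) = [:-1, 1:] * h"
    and ph: "poly h 1 = - inverse (qq ^ (n - 1)) * qint n * det (mat_delete (1\<^sub>m n - B) (n - 1) (n - 1))"
    using zeta_factor[OF burau_carrier[of n w] assms(1) burau_colsum[OF assms(2)] burau_eig[OF assms(2)]] unfolding B_def by blast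
  define Dm where "Dm = det (mat_delete (1\<^sub>m n - B) (n - 1) (n - 1))"
  have Dnz: "Dm \<noteq> 0" unfolding Dm_def B_def by (rule minor_nz[OF assms])
  define A where "A = alexander n w"
  define AM where "AM = mat (n - 1) (n - 1) (\<lambda>(i, j). B $$ (j, i) - (if i = j then 1 else 0))"
  have AMc: "AM \<in> carrier_mat (n - 1) (n - 1)" by (simp add: AM_def)
  have AA: "A = det AM" unfolding A_def AM_def B_def by (rule alexander_eq[OF assms(2)])
  have "mat_delete (1\<^sub>m n - B) (n - 1) (n - 1) = (-1) \<cdot>\<^sub>m transpose_mat AM"
    by (rule eq_matI) (use Bc in \<open>auto simp: mat_delete_def AM_def\<close>)
  then have DA: "Dm = (-1) ^ (n - 1) * A"
    unfolding Dm_def AA using AMc by (simp add: det_transpose)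
  define \<epsilon> :: qfield where "\<epsilon> = (-1) ^ (n - 1)"
  have eps: "\<epsilon> \<in> {1, -1}" unfolding \<epsilon>_def by (cases "even (n - 1)") auto
  have eps_nz: "\<epsilon> \<noteq> 0" unfolding \<epsilon>_def by simp
  have Anz: "A \<noteq> 0" using Dnz DA by auto
  have Qnz: "qint n \<noteq> 0" by (rule qint_nz[OF assms(1)])
  have qnz: "qq ^ (n - 1) \<noteq> 0" using qq_nz by simp
  have ph': "poly h 1 = - inverse (qq ^ (n - 1)) * qint n * (\<epsilon> * A)"
    using ph DA by (simp add: Dm_def \<epsilon>_def)
  have phnz: "poly h 1 \<noteq> 0" using ph' Qnz qnz eps_nz Anz by simp
  then have hnz: "h \<noteq> 0" by auto
  have zeta: "braid_zeta n w = Fract 1 ([:- 1, 1:] * h)"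
    unfolding braid_zeta_def zeta_den_def using zf by (simp add: B_def)
  have pw: "qq powi (- int (n - 1)) = inverse (qq ^ (n - 1))"
    by (simp add: power_int_minus)
  have res: "- (1 / qint n) * inverse (\<epsilon> * qq powi (- int (n - 1)) * A) = poly 1 1 / poly h 1"
    unfolding ph' pw using Qnz qnz eps_nz Anz by (simp add: field_simps)
  show ?thesis
    unfolding simple_pole_residue_def
    by (rule bexI[OF _ eps], rule exI[of _ "- int (n - 1)"], rule exI[of _ 1], rule exI[of _ h])
       (use hnz phnz zeta res in \<open>simp add: A_def\<close>)
qed


end
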